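(* Let $r>1$ be real, and let $p_m,q$ be $r$-mighty primes with $q^2<p_m$. Then the open interval $$G=\left(\sigma_{-r}(q)\,u_m(r),\ \sigma_{-r}(qp_m)\right)$$ is a gap of $\sigma_{-r}(\mathbb{S})$, i.e. a bounded connected component of $\mathbb{R}\setminus\sigma_{-r}(\mathbb{S})$.
   Context: $p_m$ denotes the $m$-th prime ($p_1=2$). For real $r>1$, $\sigma_{-r}(n)=\sum_{d\mid n}d^{-r}$ for $n\in\mathbb{N}$. A Steinitz (supernatural) number is a formal product $n=\prod_{p}p^{\alpha_p}$ over all primes with $\alpha_p\in\mathbb{Z}_{\ge0}\cup\{\infty\}$; write $v_p(n)=\alpha_p$, and let $\mathbb{S}$ be the set of Steinitz numbers. $\sigma_{-r}$ is extended to $\mathbb{S}$ multiplicatively: $\sigma_{-r}(n)=\prod_p\sigma_{-r}(p^{\alpha_p})$, where $\sigma_{-r}(p^\alpha)=\sum_{i=0}^{\alpha}p^{-ri}$ for finite $\alpha$ and $\sigma_{-r}(p^\infty)=\frac{1}{1-p^{-r}}$. Define $u_m(r)=\prod_{t=m+1}^\infty\frac{1}{1-p_t^{-r}}$. A prime $p_m$ is called $r$-mighty if $1+p_m^{-r}>u_m(r)$. *)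

theory Defs
  imports "HOL-Analysis.Analysis" "HOL-Library.Extended_Nat"
    "HOL-Computational_Algebra.Primes" "HOL-Library.Infinite_Set"
begin

text \<open>The m-th prime, 1-indexed: nth_prime 1 = 2.\<close>
definition nth_prime :: "nat \<Rightarrow> nat" where
  "nth_prime m = enumerate {p::nat. prime p} (m - 1)"

definition sigma_nat :: "real \<Rightarrow> nat \<Rightarrow> real" where
  "sigma_nat r n = (\<Sum>d | d dvd n. (real d) powr (- r))"

text \<open>Steinitz numbers: exponent functions on primes (value 0 at non-primes).\<close>
definition steinitz :: "(nat \<Rightarrow> enat) set" where
  "steinitz = {\<alpha>. \<forall>n. \<not> prime n \<longrightarrow> \<alpha> n = 0}"

definition sigma_pp :: "real \<Rightarrow> nat \<Rightarrow> enat \<Rightarrow> real" where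
  "sigma_pp r p a = (case a of
      enat k \<Rightarrow> (\<Sum>i\<le>k. (real p) powr (- r * real i))
    | \<infinity> \<Rightarrow> 1 / (1 - (real p) powr (- r)))"

definition sigma_st :: "real \<Rightarrow> (nat \<Rightarrow> enat) \<Rightarrow> real" where
  "sigma_st r \<alpha> = (\<Prod>k. sigma_pp r (nth_prime (Suc k)) (\<alpha> (nth_prime (Suc k))))"

definition u_tail :: "nat \<Rightarrow> real \<Rightarrow> real" where
  "u_tail m r = (\<Prod>k. 1 / (1 - (real (nth_prime (m + 1 + k))) powr (- r)))"

definition mighty :: "real \<Rightarrow> nat \<Rightarrow> bool" where
  "mighty r p \<longleftrightarrow> (\<exists>m\<ge>1. p = nth_prime m \<and> 1 + (real p) powr (- r) > u_tail m r)"

end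

theory Submission
  imports Defs "HOL-Number_Theory.Pocklington"
begin


abbreviation PR :: "nat \<Rightarrow> nat" where "PR k \<equiv> nth_prime (Suc k)"

lemma inf_primes: "infinite {p::nat. prime p}" using primes_infinite by simp

lemma PR_eq: "PR k = enumerate {p::nat. prime p} k"
  by (simp add: nth_prime_def)

lemma PR_prime: "prime (PR k)"
  using enumerate_in_set[OF inf_primes] by (simp add: PR_eq)

lemma PR_mono: "i < k \<Longrightarrow> PR i < PR k"
  using enumerate_mono[OF _ inf_primes] by (simp add: PR_eq)

lemma PR_mono_iff: "PR i < PR k \<longleftrightarrow> i < k"
  by (metis PR_mono less_asym linorder_neqE_nat)

lemma PR_inj: "PR i = PR k \<longleftrightarrow> i = k"
  by (metis PR_mono less_irrefl linorder_neqE_nat)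

lemma PR_le_iff: "PR i \<le> PR k \<longleftrightarrow> i \<le> k"
  by (meson PR_mono_iff not_le)

lemma PR_surj: "prime p \<Longrightarrow> \<exists>k. PR k = p"
  using enumerate_Ex[OF inf_primes, of p] by (simp add: PR_eq)

lemma PR_ge: "PR k \<ge> k + 2"
proof (induction k)
  case 0 then show ?case using prime_ge_2_nat[OF PR_prime[of 0]] by simp
next
  case (Suc k) then show ?case using PR_mono[of k "Suc k"] by simp
qed

lemma nth_prime_PR: "m \<ge> 1 \<Longrightarrow> nth_prime m = PR (m - 1)" by simp

lemma pp_enat: "sigma_pp r p (enat k) = (\<Sum>i\<le>k. ((real p) powr (- r)) ^ i)" if "p > 0"
  unfolding sigma_pp_def using that
  by (simp add: powr_realpow[symmetric] powr_powr mult.commute)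

lemma pp_inf: "sigma_pp r p \<infinity> = 1 / (1 - (real p) powr (- r))"
  unfolding sigma_pp_def by simp

lemma x_bounds:
  assumes "p \<ge> 2" "r > 0"
  shows "0 < (real p) powr (- r)" "(real p) powr (- r) < 1"
proof -
  show "0 < (real p) powr (- r)" using assms by simp
  have "(real p) powr (- r) < (real p) powr 0"
    using assms by (intro powr_less_mono) auto
  then show "(real p) powr (- r) < 1" using assms by simp
qed

lemma geo_le: fixes x :: real assumes "0 \<le> x" "x < 1"
  shows "(\<Sum>i\<le>k. x ^ i) \<le> 1 / (1 - x)"
proof -
  have "(\<Sum>i\<le>k. x ^ i) = (1 - x ^ Suc k) / (1 - x)"
    using assms sum_gp_strict[of x "Suc k"] by (simp add: lessThan_Suc_atMost)
  also have "\<dots> \<le> 1 / (1 - x)" using assms by (intro divide_right_mono) auto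
  finally show ?thesis .
qed

lemma pp_bounds:
  assumes "p \<ge> 2" "r > 0"
  shows "1 \<le> sigma_pp r p a" "sigma_pp r p a \<le> 1 / (1 - (real p) powr (- r))"
proof -
  define x where "x = (real p) powr (- r)"
  have x: "0 < x" "x < 1" using x_bounds[OF assms] by (auto simp: x_def)
  have "1 \<le> sigma_pp r p a \<and> sigma_pp r p a \<le> 1 / (1 - x)"
  proof (cases a)
    case (enat k)
    have "1 \<le> (\<Sum>i\<le>k. x ^ i)"
      using x by (subst sum.atMost_shift) (auto intro!: sum_nonneg)
    moreover have "p > 0" using assms by simp
    ultimately show ?thesis using enat pp_enat[of p r k] assms geo_le[of x k] x by (simp add: x_def)
  next
    case infinity
    then show ?thesis using x pp_inf[of r p] by (simp add: x_def)
  qed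
  then show "1 \<le> sigma_pp r p a" "sigma_pp r p a \<le> 1 / (1 - (real p) powr (- r))"
    by (auto simp: x_def)
qed

lemma pp_zero: "p > 0 \<Longrightarrow> sigma_pp r p 0 = 1"
  unfolding sigma_pp_def by (simp add: zero_enat_def)

lemma pp_one: "p > 0 \<Longrightarrow> sigma_pp r p 1 = 1 + (real p) powr (- r)"
  using pp_enat[of p r 1] by (simp add: one_enat_def)

lemma pp_ge1:
  assumes "p \<ge> 2" "r > 0" "a \<ge> 1"
  shows "sigma_pp r p a \<ge> 1 + (real p) powr (- r)"
proof -
  define x where "x = (real p) powr (- r)"
  have x: "0 < x" "x < 1" using x_bounds[OF assms(1,2)] by (auto simp: x_def)
  show ?thesis
  proof (cases a)
    case (enat k)
    with assms have "k \<ge> 1" by (simp add: one_enat_def)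
    have "(\<Sum>i\<le>1. x ^ i) \<le> (\<Sum>i\<le>k. x ^ i)"
      using x \<open>k \<ge> 1\<close> by (intro sum_mono2) auto
    moreover have "p > 0" using assms by simp
    ultimately show ?thesis using enat pp_enat[of p r k] assms by (simp add: x_def)
  next
    case infinity
    have "(1 + x) * (1 - x) \<le> 1" by (simp add: algebra_simps)
    then have "1 + x \<le> 1 / (1 - x)" using x by (simp add: field_simps)
    then show ?thesis using infinity pp_inf[of r p] by (simp add: x_def)
  qed
qed

lemma pp_ge2:
  assumes "p \<ge> 2" "r > 0" "a \<ge> 2"
  shows "sigma_pp r p a \<ge> 1 + (real p) powr (- r) + ((real p) powr (- r))^2"
proof -
  define x where "x = (real p) powr (- r)"
  have x: "0 < x" "x < 1" using x_bounds[OF assms(1,2)] by (auto simp: x_def)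
  show ?thesis
  proof (cases a)
    case (enat k)
    with assms have "k \<ge> 2" by (simp add: numeral_eq_enat)
    have "(\<Sum>i\<le>2. x ^ i) \<le> (\<Sum>i\<le>k. x ^ i)"
      using x \<open>k \<ge> 2\<close> by (intro sum_mono2) auto
    moreover have "p > 0" using assms by simp
    ultimately show ?thesis using enat pp_enat[of p r k] assms
      by (simp add: x_def numeral_2_eq_2 power2_eq_square)
  next
    case infinity
    have "(1 + x + x^2) * (1 - x) \<le> 1" using x by (simp add: algebra_simps power2_eq_square power3_eq_cube)
    then have "1 + x + x^2 \<le> 1 / (1 - x)" using x by (simp add: field_simps)
    then show ?thesis using infinity pp_inf[of r p] by (simp add: x_def)
  qed
qed

definition GG :: "real \<Rightarrow> nat \<Rightarrow> real" where
  "GG r k = 1 / (1 - (real (PR k)) powr (- r))"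

definition FF :: "real \<Rightarrow> (nat \<Rightarrow> enat) \<Rightarrow> nat \<Rightarrow> real" where
  "FF r \<alpha> k = sigma_pp r (PR k) (\<alpha> (PR k))"

lemma PR_ge2: "PR k \<ge> 2" using PR_ge[of k] by simp

lemma FF_bounds: "r > 0 \<Longrightarrow> 1 \<le> FF r \<alpha> k \<and> FF r \<alpha> k \<le> GG r k"
  unfolding FF_def GG_def using pp_bounds[OF PR_ge2] by auto

lemma GG_ge1: "r > 0 \<Longrightarrow> 1 \<le> GG r k"
  using FF_bounds[of r "\<lambda>_. 0" k] by simp

lemma GG_minus1_le:
  assumes "r > 1" "k \<ge> 1"
  shows "GG r k - 1 \<le> 2 * real k powr (- r)"
proof -
  define x where "x = (real (PR k)) powr (- r)"
  have x: "0 < x" "x < 1" using x_bounds[OF PR_ge2, of r k] assms by (auto simp: x_def)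
  have "x \<le> 2 powr (- r)"
    unfolding x_def using PR_ge2[of k] assms by (intro powr_mono2') auto
  also have "2 powr (- r) \<le> 2 powr (-1)" using assms by (intro powr_mono) auto
  finally have xh: "x \<le> 1/2" by (simp add: powr_minus_divide)
  have "GG r k - 1 = x / (1 - x)" using x unfolding GG_def x_def[symmetric] by (simp add: field_simps)
  also have "\<dots> \<le> 2 * x" using x xh by (simp add: field_simps)
  also have "x \<le> real k powr (- r)" 
    unfolding x_def using PR_ge[of k] assms by (intro powr_mono2') auto
  finally show ?thesis by simp
qed

lemma summable_GG: "r > 1 \<Longrightarrow> summable (\<lambda>k. norm (GG r k - 1))"
proof -
  assume r: "r > 1"
  have "summable (\<lambda>k. 2 * real k powr (- r))"
    using r by (intro summable_mult) (simp add: summable_real_powr_iff)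
  moreover have "norm (norm (GG r k - 1)) \<le> 2 * real k powr (- r)" if "k \<ge> 1" for k
    using GG_minus1_le[OF r that] GG_ge1[of r k] r by simp
  ultimately show ?thesis
    by (rule summable_comparison_test'[where N=1])
qed

lemma conv_GG: "r > 1 \<Longrightarrow> convergent_prod (GG r)"
  by (intro abs_convergent_prod_imp_convergent_prod summable_imp_abs_convergent_prod summable_GG)

lemma conv_FF: "r > 1 \<Longrightarrow> convergent_prod (FF r \<alpha>)"
proof -
  assume r: "r > 1"
  have "summable (\<lambda>k. norm (FF r \<alpha> k - 1))"
  proof (rule summable_comparison_test'[where N=0, OF summable_GG[OF r]])
    fix k
    show "norm (norm (FF r \<alpha> k - 1)) \<le> norm (GG r k - 1)"
      using FF_bounds[of r \<alpha> k] r by simp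
  qed
  then show ?thesis
    by (intro abs_convergent_prod_imp_convergent_prod summable_imp_abs_convergent_prod)
qed

lemma prodinf_ge_finprod:
  fixes f :: "nat \<Rightarrow> real"
  assumes "convergent_prod f" "\<And>k. 1 \<le> f k" "finite I"
  shows "(\<Prod>i\<in>I. f i) \<le> prodinf f"
proof -
  obtain n where n: "I \<subseteq> {..<n}"
    using assms(3) by (meson finite_nat_iff_bounded subset_eq lessThan_iff)
  have f0: "0 \<le> f k" for k using assms(2)[of k] by linarith
  have "(\<Prod>i\<in>I. f i) \<le> (\<Prod>i<n. f i)"
    using n assms(2) f0 by (intro prod_mono2) auto
  also have "\<dots> \<le> prodinf f"
    using assms f0 by (intro prod_le_prodinf[of f "prodinf f"]) (auto simp: convergent_prod_has_prod_iff[symmetric])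
  finally show ?thesis .
qed

lemma prodinf_mono1:
  fixes f g :: "nat \<Rightarrow> real"
  assumes "convergent_prod f" "convergent_prod g" "\<And>k. 1 \<le> f k \<and> f k \<le> g k"
  shows "prodinf f \<le> prodinf g"
proof -
  have f0: "0 \<le> f k" for k using assms(3)[of k] by linarith
  show ?thesis using assms f0 by (intro prodinf_le[of f "prodinf f" g "prodinf g"]) 
     (auto simp: convergent_prod_has_prod_iff[symmetric])
qed

lemma u_tail_eq: "u_tail m r = (\<Prod>k. GG r (k + m))"
  unfolding u_tail_def GG_def by (intro prodinf_cong) (simp add: add.commute)

lemma sigma_st_eq: "sigma_st r \<alpha> = prodinf (FF r \<alpha>)"
  unfolding sigma_st_def FF_def by simp

lemma GG_pp: "GG r k = sigma_pp r (PR k) \<infinity>"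
  unfolding GG_def pp_inf by simp

lemma GG_ge: "r > 0 \<Longrightarrow> 1 + real (PR k) powr (- r) \<le> GG r k"
  unfolding GG_pp by (rule pp_ge1[OF PR_ge2]) auto

lemma prod_ge_1_sum:
  fixes x :: "'a \<Rightarrow> real"
  assumes "finite I" "\<And>i. i \<in> I \<Longrightarrow> 0 \<le> x i"
  shows "1 + (\<Sum>i\<in>I. x i) \<le> (\<Prod>i\<in>I. 1 + x i)"
  using assms
proof (induction I rule: finite_induct)
  case empty then show ?case by simp
next
  case (insert a I)
  have xa: "0 \<le> x a" using insert by auto
  have s0: "0 \<le> (\<Sum>i\<in>I. x i)" using insert by (auto intro: sum_nonneg)
  have IH: "1 + (\<Sum>i\<in>I. x i) \<le> (\<Prod>i\<in>I. 1 + x i)" using insert by auto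
  have "1 + (\<Sum>i\<in>insert a I. x i) = 1 + x a + (\<Sum>i\<in>I. x i)" using insert by simp
  also have "\<dots> \<le> (1 + x a) * (1 + (\<Sum>i\<in>I. x i))" using xa s0 by (simp add: algebra_simps)
  also have "\<dots> \<le> (1 + x a) * (\<Prod>i\<in>I. 1 + x i)" using IH xa by (intro mult_left_mono) auto
  also have "\<dots> = (\<Prod>i\<in>insert a I. 1 + x i)" using insert by simp
  finally show ?case .
qed

lemma mighty_offsets:
  assumes r: "r > 1" and m: "u_tail (J+1) r < 1 + real (PR J) powr (- r)" and I: "finite I"
  shows "(\<Sum>i\<in>I. real (PR (i + (J+1))) powr (- r)) < real (PR J) powr (- r)"
proof -
  have cv: "convergent_prod (\<lambda>k. GG r (k + (J+1)))"
    by (subst convergent_prod_iff_shift) (rule conv_GG[OF r])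
  have "1 + (\<Sum>i\<in>I. real (PR (i + (J+1))) powr (- r)) \<le> (\<Prod>i\<in>I. 1 + real (PR (i + (J+1))) powr (- r))"
    using I by (intro prod_ge_1_sum) auto
  also have "\<dots> \<le> (\<Prod>i\<in>I. GG r (i + (J+1)))"
    using r by (intro prod_mono) (auto intro: GG_ge add_nonneg_nonneg)
  also have "\<dots> \<le> (\<Prod>k. GG r (k + (J+1)))"
    using cv I GG_ge1[of r] r by (intro prodinf_ge_finprod) auto
  also have "\<dots> = u_tail (J+1) r" by (simp add: u_tail_eq)
  finally show ?thesis using m by simp
qed

lemma mighty_primes:
  assumes r: "r > 1" and m: "u_tail (J+1) r < 1 + real (PR J) powr (- r)"
    and F: "finite F" "\<And>p. p \<in> F \<Longrightarrow> prime p \<and> PR J < p"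
  shows "(\<Sum>p\<in>F. real p powr (- r)) < real (PR J) powr (- r)"
proof -
  define I where "I = {i. PR (i + (J+1)) \<in> F}"
  have inj: "inj (\<lambda>i. PR (i + (J+1)))" by (intro injI) (simp add: PR_inj)
  have finI: "finite I" unfolding I_def using finite_vimageI[OF F(1) inj] by (simp add: vimage_def)
  have bij: "bij_betw (\<lambda>i. PR (i + (J+1))) I F"
    unfolding bij_betw_def
  proof
    show "inj_on (\<lambda>i. PR (i + (J+1))) I" using inj by (simp add: inj_on_def)
    show "(\<lambda>i. PR (i + (J+1))) ` I = F"
    proof
      show "(\<lambda>i. PR (i + (J+1))) ` I \<subseteq> F" by (auto simp: I_def)
      show "F \<subseteq> (\<lambda>i. PR (i + (J+1))) ` I"
      proof
        fix p assume p: "p \<in> F"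
        then obtain k where k: "PR k = p" using F(2) PR_surj by blast
        have "J < k" using F(2)[OF p] k PR_mono_iff by auto
        then have "p = PR ((k - (J+1)) + (J+1))" using k by simp
        moreover have "k - (J+1) \<in> I" using \<open>J < k\<close> k p by (simp add: I_def)
        ultimately show "p \<in> (\<lambda>i. PR (i + (J+1))) ` I" by blast
      qed
    qed
  qed
  have "(\<Sum>p\<in>F. real p powr (- r)) = (\<Sum>i\<in>I. real (PR (i + (J+1))) powr (- r))"
    using sum.reindex_bij_betw[OF bij, of "\<lambda>p. real p powr (- r)"] by simp
  also have "\<dots> < real (PR J) powr (- r)" by (rule mighty_offsets[OF r m finI])
  finally show ?thesis .
qed




lemma Suc_div_diff: "0 < d \<Longrightarrow> Suc n div d = n div d + (if d dvd Suc n then 1 else 0)"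
  by (auto simp: div_Suc dvd_eq_mod_eq_0)

lemma kpow_less: "(p::nat) \<ge> 2 \<Longrightarrow> k < p ^ k"
proof -
  assume "p \<ge> 2"
  then have "(2::nat) ^ k \<le> p ^ k" by (intro power_mono) auto
  moreover have "k < 2 ^ k" by (rule less_exp)
  ultimately show ?thesis by linarith
qed

lemma mult_le_self: "prime (p::nat) \<Longrightarrow> m > 0 \<Longrightarrow> multiplicity p m < m"
proof -
  assume p: "prime p" and m: "m > 0"
  have "p ^ multiplicity p m dvd m" by (rule multiplicity_dvd)
  then have "p ^ multiplicity p m \<le> m" using m by (rule dvd_imp_le)
  moreover have "multiplicity p m < p ^ multiplicity p m"
    using p prime_ge_2_nat[OF p] by (intro kpow_less) auto
  ultimately show ?thesis by linarith
qed

lemma mult_as_card: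
  assumes p: "prime (p::nat)" and m: "m > 0"
  shows "multiplicity p m = card {i\<in>{1..m}. p ^ i dvd m}"
proof -
  have "{i\<in>{1..m}. p ^ i dvd m} = {1..multiplicity p m}"
  proof -
    have nu: "\<not> is_unit p" using prime_gt_1_nat[OF p] by simp
    have m0: "m \<noteq> 0" using m by simp
    have iff: "p ^ i dvd m \<longleftrightarrow> i \<le> multiplicity p m" for i
      by (rule power_dvd_iff_le_multiplicity[OF m0 nu])
    have "multiplicity p m < m" by (rule mult_le_self[OF p m])
    then show ?thesis unfolding iff by auto
  qed
  then show ?thesis by simp
qed

lemma legendre:
  assumes p: "prime (p::nat)"
  shows "multiplicity p (fact n) = (\<Sum>i\<in>{1..n}. n div p ^ i)"
proof (induction n)
  case 0 then show ?case by simp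
next
  case (Suc n)
  have pp: "0 < p ^ i" for i using p prime_gt_0_nat by simp
  have "multiplicity p (fact (Suc n) :: nat) = multiplicity p (Suc n) + multiplicity p (fact n :: nat)"
    using p prime_elem_multiplicity_mult_distrib[of p "Suc n" "fact n"] by (simp only: fact_Suc) simp
  also have "multiplicity p (Suc n) = (\<Sum>i\<in>{1..Suc n}. if p ^ i dvd Suc n then 1 else 0)"
  proof -
    have "multiplicity p (Suc n) = card {i\<in>{1..Suc n}. p ^ i dvd Suc n}"
      using mult_as_card[OF p, of "Suc n"] by simp
    also have "\<dots> = (\<Sum>i\<in>{i\<in>{1..Suc n}. p ^ i dvd Suc n}. 1)" by simp
    also have "\<dots> = (\<Sum>i\<in>{1..Suc n}. if p ^ i dvd Suc n then 1 else 0)"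
      by (rule sum.inter_filter) simp
    finally show ?thesis .
  qed
  also have "multiplicity p (fact n :: nat) = (\<Sum>i\<in>{1..Suc n}. n div p ^ i)"
  proof -
    have "n div p ^ Suc n = 0"
    proof -
      have "n < Suc n" by simp
      also have "Suc n < p ^ Suc n" using prime_ge_2_nat[OF p] by (intro kpow_less) auto
      finally show ?thesis by simp
    qed
    then show ?thesis using Suc.IH by (simp add: sum.cl_ivl_Suc)
  qed
  also have "(\<Sum>i\<in>{1..Suc n}. if p ^ i dvd Suc n then 1 else 0) + (\<Sum>i\<in>{1..Suc n}. n div p ^ i)
      = (\<Sum>i\<in>{1..Suc n}. Suc n div p ^ i)"
    by (subst sum.distrib[symmetric]) (intro sum.cong refl, simp add: Suc_div_diff[OF pp])
  finally show ?case .
qed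

lemma div2_le: "0 < (d::nat) \<Longrightarrow> (2*n) div d \<le> 2 * (n div d) + 1"
proof -
  assume d: "0 < d"
  have "n < (n div d + 1) * d" using d
    by (metis div_less_iff_less_mult less_add_one)
  then have "2 * n < (2 * (n div d) + 2) * d" by (simp add: algebra_simps)
  then have "(2*n) div d < 2 * (n div d) + 2" using d by (simp add: div_less_iff_less_mult)
  then show ?thesis by simp
qed

lemma div2_ge: "0 < (d::nat) \<Longrightarrow> 2 * (n div d) \<le> (2*n) div d"
proof -
  assume d: "0 < d"
  have "2 * (n div d) * d \<le> 2 * n" 
    by (metis mult.assoc mult_le_mono2 div_times_less_eq_dividend)
  then show ?thesis using d by (simp add: less_eq_div_iff_mult_less_eq)
qed

lemma binom_pp_le:
  assumes p: "prime (p::nat)" and n: "n > 0"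
  shows "p ^ multiplicity p ((2*n) choose n) \<le> 2*n"
proof (rule ccontr)
  define C where "C = (2*n) choose n"
  define k where "k = multiplicity p C"
  assume "\<not> p ^ multiplicity p ((2*n) choose n) \<le> 2*n"
  then have big: "2*n < p ^ k" by (simp add: k_def C_def)
  have pp: "0 < p ^ i" for i using p prime_gt_0_nat by simp
  have C0: "C \<noteq> 0" by (simp add: C_def)
  have f: "fact n * fact n * C = (fact (2*n) :: nat)"
    using binomial_fact_lemma[of n "2*n"] by (simp add: C_def mult_2)
  have "multiplicity p (fact (2*n) :: nat) = multiplicity p (fact n :: nat) + multiplicity p (fact n :: nat) + k"
    unfolding f[symmetric] k_def using p C0
    by (simp add: prime_elem_multiplicity_mult_distrib)
  then have eq: "(\<Sum>i\<in>{1..2*n}. (2*n) div p ^ i) = 2 * (\<Sum>i\<in>{1..n}. n div p ^ i) + k"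
    using legendre[OF p, of n] legendre[OF p, of "2*n"] by simp
  have ext: "(\<Sum>i\<in>{1..n}. n div p ^ i) = (\<Sum>i\<in>{1..2*n}. n div p ^ i)"
  proof (rule sum.mono_neutral_left)
    show "\<forall>i\<in>{1..2 * n} - {1..n}. n div p ^ i = 0"
    proof
      fix i assume "i \<in> {1..2 * n} - {1..n}"
      then have "n < i" by auto
      also have "i < p ^ i" using prime_ge_2_nat[OF p] by (rule kpow_less)
      finally show "n div p ^ i = 0" by simp
    qed
  qed auto
  define T where "T i = (2*n) div p ^ i - 2 * (n div p ^ i)" for i
  have "(\<Sum>i\<in>{1..2*n}. (2*n) div p ^ i) = (\<Sum>i\<in>{1..2*n}. T i + 2 * (n div p ^ i))"
    using div2_ge[OF pp] by (intro sum.cong) (auto simp: T_def)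
  also have "\<dots> = (\<Sum>i\<in>{1..2*n}. T i) + 2 * (\<Sum>i\<in>{1..2*n}. n div p ^ i)"
    by (simp add: sum.distrib sum_distrib_left)
  finally have kT: "k = (\<Sum>i\<in>{1..2*n}. T i)" using eq ext by simp
  have Tle: "T i \<le> (if i < k then 1 else 0)" for i
  proof (cases "i < k")
    case True then show ?thesis using div2_le[OF pp, of n i] by (simp add: T_def)
  next
    case False
    then have "p ^ k \<le> p ^ i" using prime_gt_0_nat[OF p] by (intro power_increasing) auto
    with big have "(2*n) div p ^ i = 0" by simp
    then show ?thesis using False by (simp add: T_def)
  qed
  have s1: "(\<Sum>i\<in>{1..2*n}. T i) \<le> (\<Sum>i\<in>{1..2*n}. if i < k then 1 else 0)"
    by (intro sum_mono Tle)
  have s2: "(\<Sum>i\<in>{1..2*n}. if i < k then 1 else 0) = card {i\<in>{1..2*n}. i < k}"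
    by (simp add: sum.inter_filter[symmetric])
  have s3: "card {i\<in>{1..2*n}. i < k} \<le> card {1..<k}"
    by (intro card_mono) auto
  have s4: "card {1..<k} = k - 1" by simp
  have "k \<le> k - 1" using s1 s2 s3 s4 kT by linarith
  then have "k = 0" by simp
  with big show False using n by simp
qed

lemma binom_le_pow:
  assumes n: "n > 0"
  shows "(2*n) choose n \<le> (2*n) ^ card {p. prime p \<and> p \<le> 2*n}"
proof -
  define C where "C = (2*n) choose n"
  have C0: "C > 0" by (simp add: C_def)
  have sub: "prime_factors C \<subseteq> {p. prime p \<and> p \<le> 2*n}"
  proof
    fix p assume "p \<in> prime_factors C"
    then have p: "prime p" "p dvd C" by (auto simp: in_prime_factors_iff)
    have "C dvd fact (2*n)"
      using binomial_fact_lemma[of n "2*n"] by (simp add: C_def mult_2) (metis dvd_triv_right)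
    then have "p dvd fact (2*n)" using p(2) dvd_trans by blast
    then show "p \<in> {p. prime p \<and> p \<le> 2*n}" using p(1) prime_dvd_fact_iff[OF p(1)] by simp
  qed
  have "C = (\<Prod>p\<in>prime_factors C. p ^ multiplicity p C)"
    using prime_factorization_nat[OF C0] .
  also have "\<dots> \<le> (\<Prod>p\<in>prime_factors C. 2*n)"
    by (intro prod_mono) (auto simp: C_def in_prime_factors_iff binom_pp_le[OF _ n])
  also have "\<dots> = (2*n) ^ card (prime_factors C)" by simp
  also have "\<dots> \<le> (2*n) ^ card {p. prime p \<and> p \<le> 2*n}"
    using n sub by (intro power_increasing card_mono) auto
  finally show ?thesis by (simp add: C_def)
qed

lemma card_primes_split:
  "card {p. prime p \<and> p \<le> (m::nat)} \<le> q + card {p. prime p \<and> q < p \<and> p \<le> m}"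
proof -
  have "{p. prime p \<and> p \<le> m} \<subseteq> {1..q} \<union> {p. prime p \<and> q < p \<and> p \<le> m}"
  proof
    fix p assume "p \<in> {p. prime p \<and> p \<le> m}"
    then have "prime p" "p \<le> m" by auto
    moreover have "p \<ge> 1" using prime_gt_0_nat[OF \<open>prime p\<close>] by simp
    ultimately show "p \<in> {1..q} \<union> {p. prime p \<and> q < p \<and> p \<le> m}" by auto
  qed
  then have "card {p. prime p \<and> p \<le> m} \<le> card ({1..q} \<union> {p. prime p \<and> q < p \<and> p \<le> m})"
    by (intro card_mono) auto
  also have "\<dots> \<le> card {1..q} + card {p. prime p \<and> q < p \<and> p \<le> m}" by (rule card_Un_le)
  finally show ?thesis by simp
qed

lemma many_primes:
  fixes q t :: nat
  assumes q: "q \<ge> 1" and t: "t \<ge> 1" and ev: "even (t*q)" and tq: "t^2 \<le> q" and ex: "(t*q)^2 < 2^t"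
  shows "t^2 \<le> card {p. prime p \<and> q < p \<and> p \<le> t*q}"
proof (rule ccontr)
  define N where "N = card {p. prime p \<and> q < p \<and> p \<le> t*q}"
  assume "\<not> t^2 \<le> card {p. prime p \<and> q < p \<and> p \<le> t*q}"
  then have N: "N < t^2" by (simp add: N_def)
  obtain n where n2: "t*q = 2*n" using ev by auto
  have n: "n > 0" using n2 q t by (metis mult_is_0 not_gr_zero not_one_le_zero)
  have "4^n / (2*real n) \<le> real ((2*n) choose n)" by (rule central_binomial_lower_bound[OF n])
  then have "real (4^n) \<le> real ((2*n) * ((2*n) choose n))" using n by (simp add: field_simps)
  then have "4^n \<le> (2*n) * ((2*n) choose n)" by linarith
  also have "\<dots> \<le> (2*n) * (2*n) ^ card {p. prime p \<and> p \<le> 2*n}"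
    by (intro mult_le_mono2 binom_le_pow[OF n])
  also have "\<dots> = (2*n) ^ (card {p. prime p \<and> p \<le> 2*n} + 1)" by simp
  also have "\<dots> \<le> (2*n) ^ (2*q)"
  proof (intro power_increasing)
    have "card {p. prime p \<and> p \<le> 2*n} \<le> q + N"
      using card_primes_split[of "2*n" q] n2 by (simp add: N_def)
    then show "card {p. prime p \<and> p \<le> 2*n} + 1 \<le> 2*q" using N tq by linarith
  qed (use n in auto)
  also have "\<dots> = ((t*q)^2)^q" using n2 by (simp add: power_mult)
  also have "\<dots> < (2^t)^q" using ex q by (intro power_strict_mono) auto
  also have "\<dots> = 2^(t*q)" by (simp add: power_mult)
  also have "\<dots> = 4^n" unfolding n2 by (simp add: power_mult)
  finally show False by simp
qed

lemma pow_bound: "L \<ge> 12 \<Longrightarrow> 16*(L+1)^2 \<le> (2::nat)^L"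
proof (induction L rule: dec_induct)
  case base then show ?case by simp
next
  case (step L)
  have "12*12 \<le> L*L" using step(1) by (intro mult_le_mono) auto
  then have "16*(Suc L+1)^2 \<le> 2 * (16*(L+1)^2)" by (simp add: power2_eq_square algebra_simps)
  also have "\<dots> \<le> 2 * 2^L" using step(3) by simp
  finally show ?case by simp
qed

lemma large_q:
  assumes q: "q \<ge> 4096"
  shows "\<exists>t\<ge>1. t^2 \<le> card {p. prime p \<and> q < p \<and> p \<le> t*q}"
proof -
  obtain L where L: "2^L \<le> q" "q < 2^(L+1)" using ex_power_ivl1[of 2 q] q by auto
  have "L \<ge> 12"
  proof (rule ccontr)
    assume "\<not> L \<ge> 12"
    then have "(2::nat)^(L+1) \<le> 2^12" by (intro power_increasing) auto
    with L q show False by simp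
  qed
  define t where "t = 4*(L+1)"
  have pb: "16*(L+1)^2 \<le> 2^L" by (rule pow_bound[OF \<open>L \<ge> 12\<close>])
  have "t^2 = 16*(L+1)^2" by (simp add: t_def power2_eq_square algebra_simps)
  then have "t^2 \<le> q" using pb L by linarith
  moreover have "(t*q)^2 < 2^t"
  proof -
    have "(t*q)^2 < (t*2^(L+1))^2" using L t_def by (intro power_strict_mono) auto
    also have "\<dots> = 16*(L+1)^2 * 4^(L+1)"
    proof -
      have f4: "(4::nat) = 2*2" by simp
      have "(4::nat)^(L+1) = 2^(L+1)*2^(L+1)" unfolding f4 by (rule power_mult_distrib)
      then show ?thesis by (simp add: t_def power2_eq_square algebra_simps)
    qed
    also have "\<dots> \<le> 4^(L+1) * 4^(L+1)"
    proof -
      have "(2::nat)^L \<le> 4^L" by (intro power_mono) auto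
      then have "(2::nat)^L \<le> 4^(L+1)" by simp
      then show ?thesis using pb by simp
    qed
    also have "\<dots> = 2^t"
    proof -
      have "(2::nat)^t = (2^4)^(L+1)" unfolding t_def by (rule power_mult)
      also have "\<dots> = 4^(L+1) * 4^(L+1)" by (simp add: power_mult_distrib[symmetric])
      finally show ?thesis by simp
    qed
    finally show ?thesis .
  qed
  moreover have "even (t*q)" by (simp add: t_def)
  ultimately show ?thesis using many_primes[of q t] q by (intro exI[of _ t]) (auto simp: t_def)
qed

lemma weight_sum:
  fixes q t :: nat
  assumes q: "q \<ge> 1" and t: "t \<ge> 1" and F: "finite F" "\<And>p. p \<in> F \<Longrightarrow> q < p \<and> p \<le> t*q"
    and c: "t^2 \<le> card F"
  shows "1 \<le> (\<Sum>p\<in>F. (real q / real p)^2)"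
proof -
  have "(\<Sum>p\<in>F. 1 / real t ^ 2) \<le> (\<Sum>p\<in>F. (real q / real p)^2)"
  proof (intro sum_mono)
    fix p assume "p \<in> F"
    then have p: "q < p" "p \<le> t*q" using F by auto
    have "1 / real t \<le> real q / real p" using p q t
      by (simp add: field_simps) (metis of_nat_le_iff of_nat_mult mult.commute)
    then have "(1 / real t)^2 \<le> (real q / real p)^2" using t by (intro power_mono) auto
    then show "1 / real t ^ 2 \<le> (real q / real p)^2" by (simp add: power_divide)
  qed
  moreover have "(\<Sum>p\<in>F. 1 / real t ^ 2) = real (card F) / real t ^ 2" by simp
  moreover have "real (card F) / real t ^ 2 \<ge> 1" using c t
    by (simp add: field_simps)
  ultimately show ?thesis by linarith
qed

primrec nd :: "nat \<Rightarrow> nat \<Rightarrow> nat \<Rightarrow> bool" where 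
  "nd p d 0 = True" | "nd p d (Suc k) = (\<not> d dvd p \<and> nd p (d+1) k)"

lemma nd_num: "nd p d (numeral k) = (\<not> d dvd p \<and> nd p (d+1) (pred_numeral k))"
  by (simp add: numeral_eq_Suc)

lemma nd_D: "nd p d k \<Longrightarrow> d \<le> e \<Longrightarrow> e < d + k \<Longrightarrow> \<not> e dvd p"
proof (induction k arbitrary: d)
  case 0 then show ?case by simp
next
  case (Suc k)
  show ?case
  proof (cases "e = d")
    case True then show ?thesis using Suc.prems by simp
  next
    case False then show ?thesis using Suc.prems Suc.IH[of "d+1"] by simp
  qed
qed

lemma prime_nd:
  fixes p s :: nat
  assumes "1 < p" "p < (s+1)^2" "nd p 2 (s - 1)"
  shows "prime p"
proof -
  have "\<nexists>l. prime l \<and> l dvd p \<and> l^2 \<le> p"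
  proof
    assume "\<exists>l. prime l \<and> l dvd p \<and> l^2 \<le> p"
    then obtain l where l: "prime l" "l dvd p" "l^2 \<le> p" by auto
    have "l \<le> s"
    proof (rule ccontr)
      assume "\<not> l \<le> s"
      then have "(s+1)^2 \<le> l^2" by (intro power_mono) auto
      with l(3) assms(2) show False by simp
    qed
    moreover have "2 \<le> l" using prime_ge_2_nat[OF l(1)] .
    ultimately have "\<not> l dvd p" using nd_D[OF assms(3), of l] by simp
    with l(2) show False by simp
  qed
  then show ?thesis using assms(1) prime_prime_factor_sqrt[of p] by auto
qed

lemma pr_2: "prime (2::nat)" by simp
lemma pr_3: "prime (3::nat)" by (rule prime_nd[where s=1]) (simp_all add: power2_eq_square)
lemma pr_5: "prime (5::nat)"
  by (rule prime_nd[where s=2]) (simp_all add: nd_num)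
lemma pr_7: "prime (7::nat)"
  by (rule prime_nd[where s=2]) (simp_all add: nd_num)
lemma pr_11: "prime (11::nat)"
  by (rule prime_nd[where s=3]) (simp_all add: nd_num)
lemma pr_13: "prime (13::nat)"
  by (rule prime_nd[where s=3]) (simp_all add: nd_num)
lemma pr_17: "prime (17::nat)"
  by (rule prime_nd[where s=4]) (simp_all add: nd_num)
lemma pr_19: "prime (19::nat)"
  by (rule prime_nd[where s=4]) (simp_all add: nd_num)
lemma pr_23: "prime (23::nat)"
  by (rule prime_nd[where s=4]) (simp_all add: nd_num)
lemma pr_29: "prime (29::nat)"
  by (rule prime_nd[where s=5]) (simp_all add: nd_num)
lemma pr_31: "prime (31::nat)"
  by (rule prime_nd[where s=5]) (simp_all add: nd_num)
lemma pr_37: "prime (37::nat)"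
  by (rule prime_nd[where s=6]) (simp_all add: nd_num)
lemma pr_41: "prime (41::nat)"
  by (rule prime_nd[where s=6]) (simp_all add: nd_num)
lemma pr_43: "prime (43::nat)"
  by (rule prime_nd[where s=6]) (simp_all add: nd_num)
lemma pr_47: "prime (47::nat)"
  by (rule prime_nd[where s=6]) (simp_all add: nd_num)
lemma pr_53: "prime (53::nat)"
  by (rule prime_nd[where s=7]) (simp_all add: nd_num)
lemma pr_61: "prime (61::nat)"
  by (rule prime_nd[where s=7]) (simp_all add: nd_num)
lemma pr_73: "prime (73::nat)"
  by (rule prime_nd[where s=8]) (simp_all add: nd_num)
lemma pr_83: "prime (83::nat)"
  by (rule prime_nd[where s=9]) (simp_all add: nd_num)
lemma pr_103: "prime (103::nat)"
  by (rule prime_nd[where s=10]) (simp_all add: nd_num)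
lemma pr_113: "prime (113::nat)"
  by (rule prime_nd[where s=10]) (simp_all add: nd_num)
lemma pr_139: "prime (139::nat)"
  by (rule prime_nd[where s=11]) (simp_all add: nd_num)
lemma pr_163: "prime (163::nat)"
  by (rule prime_nd[where s=12]) (simp_all add: nd_num)
lemma pr_199: "prime (199::nat)"
  by (rule prime_nd[where s=14]) (simp_all add: nd_num)
lemma pr_223: "prime (223::nat)"
  by (rule prime_nd[where s=14]) (simp_all add: nd_num)
lemma pr_277: "prime (277::nat)"
  by (rule prime_nd[where s=16]) (simp_all add: nd_num)
lemma pr_317: "prime (317::nat)"
  by (rule prime_nd[where s=17]) (simp_all add: nd_num)
lemma pr_397: "prime (397::nat)"
  by (rule prime_nd[where s=19]) (simp_all add: nd_num)
lemma pr_443: "prime (443::nat)"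
  by (rule prime_nd[where s=21]) (simp_all add: nd_num)
lemma pr_547: "prime (547::nat)"
  by (rule prime_nd[where s=23]) (simp_all add: nd_num)
lemma pr_631: "prime (631::nat)"
  by (rule prime_nd[where s=25]) (simp_all add: nd_num)
lemma pr_787: "prime (787::nat)"
  by (rule prime_nd[where s=28]) (simp_all add: nd_num)
lemma pr_883: "prime (883::nat)"
  by (rule prime_nd[where s=29]) (simp_all add: nd_num)
lemma pr_1093: "prime (1093::nat)"
  by (rule prime_nd[where s=33]) (simp_all add: nd_num)
lemma pr_1259: "prime (1259::nat)"
  by (rule prime_nd[where s=35]) (simp_all add: nd_num)
lemma pr_1571: "prime (1571::nat)"
  by (rule prime_nd[where s=39]) (simp_all add: nd_num)
lemma pr_1759: "prime (1759::nat)"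
  by (rule prime_nd[where s=41]) (simp_all add: nd_num)
lemma pr_2179: "prime (2179::nat)"
  by (rule prime_nd[where s=46]) (simp_all add: nd_num)
lemma pr_2503: "prime (2503::nat)"
  by (rule prime_nd[where s=50]) (simp_all add: nd_num)
lemma pr_3137: "prime (3137::nat)"
  by (rule prime_nd[where s=56]) (simp_all add: nd_num)
lemma pr_3517: "prime (3517::nat)"
  by (rule prime_nd[where s=59]) (simp_all add: nd_num)
lemma pr_4357: "prime (4357::nat)"
  by (rule prime_nd[where s=66]) (simp_all add: nd_num)
lemma pr_5003: "prime (5003::nat)"
  by (rule prime_nd[where s=70]) (simp_all add: nd_num)
lemma pr_6271: "prime (6271::nat)"
  by (rule prime_nd[where s=79]) (simp_all add: nd_num)
lemma pr_7027: "prime (7027::nat)"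
  by (rule prime_nd[where s=83]) (simp_all add: nd_num)
lemma pr_8713: "prime (8713::nat)"
  by (rule prime_nd[where s=93]) (simp_all add: nd_num)

fun chainok :: "nat list \<Rightarrow> bool" where
  "chainok (a#b#c#d#e#rest) = (a<b \<and> b<c \<and> c<d \<and> d<e \<and> e \<le> 2*a \<and> chainok (b#c#d#e#rest))"
| "chainok _ = True"

lemma chain_lemma:
  "chainok L \<Longrightarrow> list_all prime L \<Longrightarrow> 5 \<le> length L \<Longrightarrow> hd L \<le> q \<Longrightarrow> q < L!(length L - 4)
   \<Longrightarrow> 4 \<le> card {p. prime p \<and> q < p \<and> p \<le> 2*q}"
proof (induction L rule: chainok.induct)
  case (1 a b c d e rest)
  show ?case
  proof (cases "q < b")
    case True
    have sub: "{b,c,d,e} \<subseteq> {p. prime p \<and> q < p \<and> p \<le> 2*q}" using 1(2-5) True by auto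
    have c4: "card {b,c,d,e} = 4" using 1(2) by auto
    have fin: "finite {p. prime p \<and> q < p \<and> p \<le> 2*q}" by (rule finite_subset[of _ "{..2*q}"]) auto
    show ?thesis using card_mono[OF fin sub] c4 by simp
  next
    case False
    have "rest \<noteq> []"
    proof
      assume "rest = []"
      then show False using 1(6) False by simp
    qed
    then have "5 \<le> length (b#c#d#e#rest)" by (cases rest) auto
    moreover have "q < (b#c#d#e#rest)!(length (b#c#d#e#rest) - 4)"
      using 1(6) \<open>rest \<noteq> []\<close> by (cases rest) auto
    ultimately show ?thesis using 1 False by simp
  qed
qed auto

lemma lap: "list_all prime [17, 19, 23, 29, 31, 37, 43, 53, 61, 73, 83, 103, 113, 139, 163, 199, 223, 277, 317, 397, 443, 547, 631, 787, 883, 1093, 1259, 1571, 1759, 2179, 2503, 3137, 3517, 4357, 5003, 6271, 7027, 8713::nat]"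
  by (simp only: list.pred_inject simp_thms pr_17 pr_19 pr_23 pr_29 pr_31 pr_37 pr_43 pr_53 pr_61 pr_73 pr_83 pr_103 pr_113 pr_139 pr_163 pr_199 pr_223 pr_277 pr_317 pr_397 pr_443 pr_547 pr_631 pr_787 pr_883 pr_1093 pr_1259 pr_1571 pr_1759 pr_2179 pr_2503 pr_3137 pr_3517 pr_4357 pr_5003 pr_6271 pr_7027 pr_8713)
lemma mid_q: "17 \<le> (q::nat) \<Longrightarrow> q < 4096 \<Longrightarrow> 4 \<le> card {p. prime p \<and> q < p \<and> p \<le> 2*q}"
proof -
  assume a: "17 \<le> q" "q < 4096"
  have c: "chainok [17, 19, 23, 29, 31, 37, 43, 53, 61, 73, 83, 103, 113, 139, 163, 199, 223, 277, 317, 397, 443, 547, 631, 787, 883, 1093, 1259, 1571, 1759, 2179, 2503, 3137, 3517, 4357, 5003, 6271, 7027, 8713::nat]" by simp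
  have l: "5 \<le> length [17, 19, 23, 29, 31, 37, 43, 53, 61, 73, 83, 103, 113, 139, 163, 199, 223, 277, 317, 397, 443, 547, 631, 787, 883, 1093, 1259, 1571, 1759, 2179, 2503, 3137, 3517, 4357, 5003, 6271, 7027, 8713::nat]" by simp
  have h: "hd [17, 19, 23, 29, 31, 37, 43, 53, 61, 73, 83, 103, 113, 139, 163, 199, 223, 277, 317, 397, 443, 547, 631, 787, 883, 1093, 1259, 1571, 1759, 2179, 2503, 3137, 3517, 4357, 5003, 6271, 7027, 8713::nat] \<le> q" using a by simp
  have n: "q < [17, 19, 23, 29, 31, 37, 43, 53, 61, 73, 83, 103, 113, 139, 163, 199, 223, 277, 317, 397, 443, 547, 631, 787, 883, 1093, 1259, 1571, 1759, 2179, 2503, 3137, 3517, 4357, 5003, 6271, 7027, 8713::nat] ! (length [17, 19, 23, 29, 31, 37, 43, 53, 61, 73, 83, 103, 113, 139, 163, 199, 223, 277, 317, 397, 443, 547, 631, 787, 883, 1093, 1259, 1571, 1759, 2179, 2503, 3137, 3517, 4357, 5003, 6271, 7027, 8713::nat] - 4)" using a by simp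
  show ?thesis by (rule chain_lemma[OF c lap l h n])
qed
lemma notprime: "d dvd n \<Longrightarrow> 1 < d \<Longrightarrow> d < n \<Longrightarrow> \<not> prime (n::nat)"
  by (auto simp: prime_nat_iff)

lemma NT:
  assumes q: "prime q" "q \<ge> 5"
  shows "\<exists>F. finite F \<and> (\<forall>p\<in>F. prime p \<and> q < p) \<and> 1 \<le> (\<Sum>p\<in>F. (real q / real p)^2)"
proof -
  have gen: ?thesis if t: "t \<ge> 1" and c: "t^2 \<le> card {p. prime p \<and> q < p \<and> p \<le> t*q}" for t
  proof (intro exI conjI)
    show fin: "finite {p. prime p \<and> q < p \<and> p \<le> t*q}" by (rule finite_subset[of _ "{..t*q}"]) auto
    show "\<forall>p\<in>{p. prime p \<and> q < p \<and> p \<le> t*q}. prime p \<and> q < p" by auto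
    show "1 \<le> (\<Sum>p\<in>{p. prime p \<and> q < p \<and> p \<le> t*q}. (real q / real p)^2)"
      using q t c fin by (intro weight_sum[of q t]) auto
  qed
  consider "q \<ge> 4096" | "17 \<le> q \<and> q < 4096" | "q < 17" by linarith
  then show ?thesis
  proof cases
    case 1 then show ?thesis using large_q gen by blast
  next
    case 2 then show ?thesis using mid_q[of q] gen[of 2] by simp
  next
    case 3
    have "q = 5 \<or> q = 6 \<or> q = 7 \<or> q = 8 \<or> q = 9 \<or> q = 10 \<or> q = 11 \<or> q = 12 \<or> q = 13 \<or> q = 14 \<or> q = 15 \<or> q = 16"
      using 3 q(2) by presburger
    moreover have "\<not> prime (6::nat)" "\<not> prime (8::nat)" "\<not> prime (10::nat)" "\<not> prime (12::nat)"
      "\<not> prime (14::nat)" "\<not> prime (16::nat)" by (rule notprime[of 2]; simp)+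
    moreover have "\<not> prime (9::nat)" "\<not> prime (15::nat)" by (rule notprime[of 3]; simp)+
    ultimately have "q = 5 \<or> q = 7 \<or> q = 11 \<or> q = 13" using q(1) by auto
    then show ?thesis
    proof (elim disjE)
      assume "q = 5" then show ?thesis
        by (intro exI[of _ "{7,11,13,17,19,23,29,31,37,41,43,47}"]) (simp add: pr_7 pr_11 pr_13 pr_17 pr_19 pr_23 pr_29 pr_31 pr_37 pr_41 pr_43 pr_47 power_divide)
    next
      assume "q = 7" then show ?thesis
        by (intro exI[of _ "{11,13,17,19,23}"]) (simp add: pr_11 pr_13 pr_17 pr_19 pr_23 power_divide)
    next
      assume "q = 11" then show ?thesis
        by (intro exI[of _ "{13,17,19}"]) (simp add: pr_13 pr_17 pr_19 power_divide)
    next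
      assume "q = 13" then show ?thesis
        by (intro exI[of _ "{17,19,23,29}"]) (simp add: pr_17 pr_19 pr_23 pr_29 power_divide)
    qed
  qed
qed




lemma p32: "0 \<le> x \<Longrightarrow> x powr (3/2) = x * sqrt (x::real)"
proof -
  assume x: "0 \<le> x"
  show ?thesis
  proof (cases "x = 0")
    case True then show ?thesis by simp
  next
    case False
    have "x powr (3/2) = x powr (1 + 1/2)" by simp
    also have "\<dots> = x powr 1 * x powr (1/2)" by (rule powr_add)
    also have "\<dots> = x * sqrt x" using x False by (simp add: powr_half_sqrt)
    finally show ?thesis .
  qed
qed

lemma thr:
  fixes Q b r e :: real
  assumes Q: "Q > 0" and b: "Q^2 \<le> b" and e: "0 \<le> e" "e \<le> r"
    and s: "(Q^2/b) powr e + (Q/b) powr e \<le> 1" and Qb: "Q \<le> b"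
  shows "b powr (- r) * (1 + Q powr (- r)) \<le> (Q powr (- r))^2"
proof -
  have b0: "b > 0" using Q b by (metis less_le_trans zero_less_power)
  define a where "a = Q powr r"
  define c where "c = b powr r"
  have a0: "a > 0" and c0: "c > 0" using Q b0 by (auto simp: a_def c_def)
  have A: "(Q^2/b) powr r = a*a/c"
    using Q b0 by (simp add: a_def c_def powr_divide powr_mult power2_eq_square)
  have B: "(Q/b) powr r = a/c" using Q b0 by (simp add: a_def c_def powr_divide)
  have "(Q^2/b) powr r \<le> (Q^2/b) powr e"
    using b b0 e by (intro powr_mono') (auto simp: field_simps)
  moreover have "(Q/b) powr r \<le> (Q/b) powr e"
    using Qb b0 Q e by (intro powr_mono') (auto simp: field_simps)
  ultimately have "a*a/c + a/c \<le> 1" using s A B by linarith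
  then have "a*a + a \<le> c" using c0 by (simp add: field_simps)
  then have ac: "a*(a+1) \<le> c" by (simp add: algebra_simps)
  have e1: "b powr (- r) = 1/c" "Q powr (- r) = 1/a" by (simp_all add: a_def c_def powr_minus_divide)
  have "1/c * (1 + 1/a) = (a+1)/(a*c)" using a0 c0 by (simp add: field_simps)
  also have "\<dots> \<le> (a+1)/(a*(a*(a+1)))"
    by (rule divide_left_mono) (use a0 c0 ac in \<open>auto intro!: mult_pos_pos mult_left_mono\<close>)
  also have "\<dots> = (1/a)^2"
  proof -
    have "a*a > 0" "a*(a*a) > 0" using a0 by simp_all
    then have nz: "a*a + a*(a*a) \<noteq> 0" by linarith
    show ?thesis using a0 nz by (simp add: field_simps power2_eq_square)
  qed
  finally show ?thesis unfolding e1 .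
qed

lemma ratio_powr:
  fixes Q p r :: real
  assumes "Q > 0" "p > 0"
  shows "p powr (- r) = Q powr (- r) * (Q/p) powr r"
  using assms by (simp add: powr_divide powr_minus_divide)

lemma mighty_contra:
  fixes e r :: real
  assumes r: "r > 1" and m: "u_tail (J+1) r < 1 + real (PR J) powr (- r)"
    and re: "r \<le> e"
    and F: "finite F" "\<And>p. p \<in> F \<Longrightarrow> prime p \<and> PR J < p"
    and s: "1 \<le> (\<Sum>p\<in>F. (real (PR J) / real p) powr e)"
  shows False
proof -
  define Q where "Q = real (PR J)"
  have Q: "Q > 0" using PR_ge2[of J] by (simp add: Q_def)
  have lt: "(\<Sum>p\<in>F. real p powr (- r)) < Q powr (- r)"
    using mighty_primes[OF r m F] by (simp add: Q_def)
  have "Q powr (- r) * 1 \<le> Q powr (- r) * (\<Sum>p\<in>F. (Q / real p) powr e)"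
    using s Q by (intro mult_left_mono) (auto simp: Q_def)
  also have "\<dots> = (\<Sum>p\<in>F. Q powr (- r) * (Q / real p) powr e)" by (simp add: sum_distrib_left)
  also have "\<dots> \<le> (\<Sum>p\<in>F. Q powr (- r) * (Q / real p) powr r)"
  proof (intro sum_mono mult_left_mono)
    fix p assume p: "p \<in> F"
    then have "Q < real p" using F(2)[OF p] by (simp add: Q_def)
    then show "(Q / real p) powr e \<le> (Q / real p) powr r"
      using Q re by (intro powr_mono') (auto simp: field_simps)
  qed simp
  also have "\<dots> = (\<Sum>p\<in>F. real p powr (- r))"
  proof (intro sum.cong refl)
    fix p assume p: "p \<in> F"
    then have "real p > 0" using F(2)[OF p] prime_gt_0_nat by simp
    then show "Q powr (- r) * (Q / real p) powr r = real p powr (- r)"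
      using ratio_powr[OF Q, of "real p" r] by simp
  qed
  finally show False using lt by simp
qed

lemma p32_ge: "0 \<le> c \<Longrightarrow> c^2 \<le> x \<Longrightarrow> x * c \<le> x powr (3/2::real)" for x c :: real
proof -
  assume c: "0 \<le> c" "c^2 \<le> x"
  have x: "0 \<le> x" by (rule order_trans[OF zero_le_power2 c(2)])
  have "c \<le> sqrt x" using c by (intro real_le_rsqrt)
  then show ?thesis using x p32[OF x] by (simp add: mult_left_mono)
qed

lemma p32_le: "0 \<le> c \<Longrightarrow> 0 \<le> x \<Longrightarrow> x \<le> c^2 \<Longrightarrow> x powr (3/2::real) \<le> x * c" for x c :: real
proof -
  assume c: "0 \<le> c" "0 \<le> x" "x \<le> c^2"
  have "sqrt x \<le> c" using c by (intro real_le_lsqrt)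
  then show ?thesis using c p32[OF c(2)] by (simp add: mult_left_mono)
qed

lemma num_up2: "(4/5::real) powr (3/2) + (2/5) powr (3/2) \<le> 1"
proof -
  have "(4/5::real) powr (3/2) \<le> 4/5 * (9/10)" by (rule p32_le) (simp_all add: power2_eq_square)
  moreover have "(2/5::real) powr (3/2) \<le> 2/5 * (16/25)" by (rule p32_le) (simp_all add: power2_eq_square)
  ultimately show ?thesis by linarith
qed

lemma num_up3: "(9/11::real) powr (3/2) + (3/11) powr (3/2) \<le> 1"
proof -
  have "(9/11::real) powr (3/2) \<le> 9/11 * (91/100)" by (rule p32_le) (simp_all add: power2_eq_square)
  moreover have "(3/11::real) powr (3/2) \<le> 3/11 * (53/100)" by (rule p32_le) (simp_all add: power2_eq_square)
  ultimately show ?thesis by linarith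
qed

lemma num_lo2: "1 \<le> (\<Sum>p\<in>{3::nat,5,7,11,13}. (real 2 / real p) powr (3/2))"
proof -
  have "2/3 * (81/100) \<le> (2/3::real) powr (3/2)" by (rule p32_ge) (simp_all add: power2_eq_square)
  moreover have "2/5 * (63/100) \<le> (2/5::real) powr (3/2)" by (rule p32_ge) (simp_all add: power2_eq_square)
  moreover have "2/7 * (53/100) \<le> (2/7::real) powr (3/2)" by (rule p32_ge) (simp_all add: power2_eq_square)
  moreover have "2/11 * (42/100) \<le> (2/11::real) powr (3/2)" by (rule p32_ge) (simp_all add: power2_eq_square)
  moreover have "2/13 * (39/100) \<le> (2/13::real) powr (3/2)" by (rule p32_ge) (simp_all add: power2_eq_square)
  ultimately show ?thesis by simp
qed

lemma num_lo3: "1 \<le> (\<Sum>p\<in>{5::nat,7,11,13,17,19,23}. (real 3 / real p) powr (3/2))"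
proof -
  have "3/5 * (77/100) \<le> (3/5::real) powr (3/2)" by (rule p32_ge) (simp_all add: power2_eq_square)
  moreover have "3/7 * (65/100) \<le> (3/7::real) powr (3/2)" by (rule p32_ge) (simp_all add: power2_eq_square)
  moreover have "3/11 * (52/100) \<le> (3/11::real) powr (3/2)" by (rule p32_ge) (simp_all add: power2_eq_square)
  moreover have "3/13 * (48/100) \<le> (3/13::real) powr (3/2)" by (rule p32_ge) (simp_all add: power2_eq_square)
  moreover have "3/17 * (42/100) \<le> (3/17::real) powr (3/2)" by (rule p32_ge) (simp_all add: power2_eq_square)
  moreover have "3/19 * (39/100) \<le> (3/19::real) powr (3/2)" by (rule p32_ge) (simp_all add: power2_eq_square)
  moreover have "3/23 * (36/100) \<le> (3/23::real) powr (3/2)" by (rule p32_ge) (simp_all add: power2_eq_square)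
  ultimately show ?thesis by simp
qed

lemma t1: fixes Q :: real assumes Q: "Q \<ge> 2"
  shows "(Q^2/(Q^2+1)) powr 2 + (Q/(Q^2+1)) powr 2 = Q^2/(Q^2+1)"
proof -
  have p: "0 < Q^2+1" by (intro add_nonneg_pos) simp_all
  have "(Q^2/(Q^2+1)) powr 2 = (Q^2/(Q^2+1))^2" using p by (intro powr_numeral) simp
  moreover have "(Q/(Q^2+1)) powr 2 = (Q/(Q^2+1))^2" using p Q by (intro powr_numeral) simp
  moreover have "(Q^2/(Q^2+1))^2 + (Q/(Q^2+1))^2 = Q^2/(Q^2+1)"
  proof -
    define d where "d = Q^2+1"
    have d: "d > 0" using p by (simp add: d_def)
    have "(Q^2/d)^2 + (Q/d)^2 = ((Q^2)^2 + Q^2)/d^2" by (simp add: power_divide add_divide_distrib)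
    also have "(Q^2)^2 + Q^2 = Q^2 * d" by (simp add: d_def algebra_simps power2_eq_square)
    also have "Q^2 * d / d^2 = Q^2/d" using d by (simp add: power2_eq_square)
    finally show ?thesis by (simp add: d_def)
  qed
  ultimately show ?thesis by simp
qed
lemma t2: fixes q pm :: nat assumes "q^2+1 \<le> pm" shows "(real q)^2 + 1 \<le> real pm"
proof -
  have "real (q^2+1) \<le> real pm" using assms by (simp only: of_nat_le_iff)
  then show ?thesis by simp
qed
lemma claimC:
  assumes r: "r > 1" and m: "u_tail (J+1) r < 1 + real (PR J) powr (- r)"
    and pm: "prime pm" and sq: "(PR J)^2 < pm"
  shows "real pm powr (- r) * (1 + real (PR J) powr (- r)) \<le> (real (PR J) powr (- r))^2"
proof -
  define q where "q = PR J"
  define Q where "Q = real q"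
  have q2: "q \<ge> 2" using PR_ge2 by (simp add: q_def)
  have Q: "Q \<ge> 2" using q2 by (simp add: Q_def)
  have pmq: "q^2 + 1 \<le> pm" using sq by (simp add: q_def)
  have gen: "real pm powr (- r) * (1 + Q powr (- r)) \<le> (Q powr (- r))^2"
    if b: "0 < b" "b \<le> real pm" "Q^2 \<le> b" "Q \<le> b" and e: "0 \<le> e" "e \<le> r"
      and s: "(Q^2/b) powr e + (Q/b) powr e \<le> 1" for b e
  proof -
    have "real pm powr (- r) \<le> b powr (- r)" using b r by (intro powr_mono2') auto
    moreover have "0 \<le> 1 + Q powr (- r)" by (metis powr_ge_zero add_nonneg_nonneg zero_le_one)
    ultimately have "real pm powr (- r) * (1 + Q powr (- r)) \<le> b powr (- r) * (1 + Q powr (- r))"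
      by (rule mult_right_mono)
    also have "\<dots> \<le> (Q powr (- r))^2" using Q b e s by (intro thr) auto
    finally show ?thesis .
  qed
  have "real pm powr (- r) * (1 + Q powr (- r)) \<le> (Q powr (- r))^2"
  proof (cases "r \<ge> 2")
    case True
    have bb: "Q^2 + 1 \<le> real pm" using t2[OF pmq] by (simp add: Q_def)
    have "Q * 1 \<le> Q * Q" using Q by (intro mult_left_mono) auto
    then have QQ: "Q \<le> Q^2 + 1" by (simp add: power2_eq_square)
    have "(Q^2/(Q^2+1)) powr 2 + (Q/(Q^2+1)) powr 2 = Q^2/(Q^2+1)"
      using t1[OF Q] .
    also have "\<dots> \<le> 1"
    proof -
      have "0 < Q^2 + 1" using Q by (intro add_nonneg_pos) simp_all
      then show ?thesis by (simp add: pos_divide_le_eq)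
    qed
    moreover have "0 < Q^2 + 1" using Q by (intro add_nonneg_pos) simp_all
    ultimately show ?thesis using True bb QQ by (intro gen[of "Q^2+1" 2]) simp_all
  next
    case False
    then have r2: "r < 2" by simp
    have pq: "prime q" using PR_prime by (simp add: q_def)
    consider "q \<ge> 5" | "q = 2" | "q = 3" | "q = 4"
      using q2 by linarith
    then show ?thesis
    proof cases
      case 1
      obtain F where F: "finite F" "\<forall>p\<in>F. prime p \<and> q < p" "1 \<le> (\<Sum>p\<in>F. (real q / real p)^2)"
        using NT[OF pq 1] by blast
      have eqs: "(\<Sum>p\<in>F. (real q / real p)^2) = (\<Sum>p\<in>F. (real (PR J) / real p) powr 2)"
      proof (intro sum.cong refl)
        fix p
        show "(real q / real p)^2 = (real (PR J) / real p) powr 2"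
          by (subst powr_numeral) (simp_all add: q_def)
      qed
      have F2: "\<And>p. p \<in> F \<Longrightarrow> prime p \<and> PR J < p" using F(2) by (simp add: q_def)
      have s2: "1 \<le> (\<Sum>p\<in>F. (real (PR J) / real p) powr 2)" using F(3) eqs by linarith
      have re: "r \<le> 2" using r2 by linarith
      have False by (rule mighty_contra[OF r m re F(1) F2 s2])
      then show ?thesis ..
    next
      case 2
      have Q2: "Q = 2" using 2 by (simp add: Q_def)
      show ?thesis
      proof (cases "r \<ge> 3/2")
        case True
        have "5 \<le> real pm" using pmq 2 by simp
        moreover have "(Q^2/5) powr (3/2) + (Q/5) powr (3/2) \<le> 1" using num_up2 by (simp add: Q2)
        ultimately show ?thesis using True by (intro gen[of 5 "3/2"]) (simp_all add: Q2)
      next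
        case False
        have re: "r \<le> 3/2" using False by linarith
        have fin: "finite {3::nat,5,7,11,13}" by simp
        have F2: "\<And>p. p \<in> {3::nat,5,7,11,13} \<Longrightarrow> prime p \<and> PR J < p"
          using 2 pr_3 pr_5 pr_7 pr_11 pr_13 by (auto simp: q_def)
        have s2: "1 \<le> (\<Sum>p\<in>{3::nat,5,7,11,13}. (real (PR J) / real p) powr (3/2))"
          using num_lo2 2 by (simp add: q_def)
        have False by (rule mighty_contra[OF r m re fin F2 s2])
        then show ?thesis ..
      qed
    next
      case 3
      have Q3: "Q = 3" using 3 by (simp add: Q_def)
      have np: "\<not> prime (10::nat)" by (rule notprime[of 2]) simp_all
      have "pm \<noteq> 10" using pm np by metis
      then have pm11: "11 \<le> pm" using pmq 3 by simp
      show ?thesis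
      proof (cases "r \<ge> 3/2")
        case True
        have "11 \<le> real pm" using pm11 by simp
        moreover have "(Q^2/11) powr (3/2) + (Q/11) powr (3/2) \<le> 1" using num_up3 by (simp add: Q3)
        ultimately show ?thesis using True by (intro gen[of 11 "3/2"]) (simp_all add: Q3)
      next
        case False
        have re: "r \<le> 3/2" using False by linarith
        have fin: "finite {5::nat,7,11,13,17,19,23}" by simp
        have F2: "\<And>p. p \<in> {5::nat,7,11,13,17,19,23} \<Longrightarrow> prime p \<and> PR J < p"
          using 3 pr_5 pr_7 pr_11 pr_13 pr_17 pr_19 pr_23 by (auto simp: q_def)
        have s2: "1 \<le> (\<Sum>p\<in>{5::nat,7,11,13,17,19,23}. (real (PR J) / real p) powr (3/2))"
          using num_lo3 3 by (simp add: q_def)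
        have False by (rule mighty_contra[OF r m re fin F2 s2])
        then show ?thesis ..
      qed
    next
      case 4
      have "\<not> prime (4::nat)" by (rule notprime[of 2]) simp_all
      then have False using pq 4 by simp
      then show ?thesis ..
    qed
  qed
  then show ?thesis by (simp add: Q_def q_def)
qed




lemma enat_ne0: "(a::enat) \<noteq> 0 \<Longrightarrow> 1 \<le> a"
  by (cases a) (auto simp: one_enat_def zero_enat_def)

lemma enat_one: "(a::enat) \<noteq> 0 \<Longrightarrow> \<not> 2 \<le> a \<Longrightarrow> a = 1"
  by (cases a) (auto simp: one_enat_def zero_enat_def numeral_eq_enat)

lemma FF_zero: "\<alpha> (PR k) = 0 \<Longrightarrow> FF r \<alpha> k = 1"
  unfolding FF_def using PR_ge2[of k] by (simp add: pp_zero)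

lemma FF_one: "\<alpha> (PR k) = 1 \<Longrightarrow> FF r \<alpha> k = 1 + real (PR k) powr (- r)"
  unfolding FF_def using PR_ge2[of k] by (simp add: pp_one)

lemma FF_pos: "r > 0 \<Longrightarrow> FF r \<alpha> k \<noteq> 0"
  using FF_bounds[of r \<alpha> k] by auto

lemma sigma_ge_set:
  assumes r: "r > 1" and I: "finite I"
  shows "(\<Prod>k\<in>I. FF r \<alpha> k) \<le> sigma_st r \<alpha>"
  unfolding sigma_st_eq using r I FF_bounds[of r \<alpha>]
  by (intro prodinf_ge_finprod conv_FF) auto

lemma sigma_split:
  assumes r: "r > 1"
  shows "sigma_st r \<alpha> = (\<Prod>k. FF r \<alpha> (k + n)) * (\<Prod>k<n. FF r \<alpha> k)"
  unfolding sigma_st_eq using r FF_pos[of r \<alpha>]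
  by (intro prodinf_split_initial_segment conv_FF) auto

lemma tail_le:
  assumes r: "r > 1"
  shows "(\<Prod>k. FF r \<alpha> (k + n)) \<le> u_tail n r"
proof -
  have c1: "convergent_prod (\<lambda>k. FF r \<alpha> (k + n))"
    by (subst convergent_prod_iff_shift) (rule conv_FF[OF r])
  have c2: "convergent_prod (\<lambda>k. GG r (k + n))"
    by (subst convergent_prod_iff_shift) (rule conv_GG[OF r])
  show ?thesis unfolding u_tail_eq using r FF_bounds[of r \<alpha>]
    by (intro prodinf_mono1[OF c1 c2]) auto
qed

lemma u_tail_ge1: "r > 1 \<Longrightarrow> 1 \<le> u_tail n r"
proof -
  assume r: "r > 1"
  have c2: "convergent_prod (\<lambda>k. GG r (k + n))"
    by (subst convergent_prod_iff_shift) (rule conv_GG[OF r])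
  have "(\<Prod>k\<in>{}. GG r (k + n)) \<le> (\<Prod>k. GG r (k + n))"
    using r GG_ge1[of r] by (intro prodinf_ge_finprod[OF c2]) auto
  then show ?thesis by (simp add: u_tail_eq)
qed

lemma small_prime_ineq:
  fixes a q pm :: nat
  assumes a: "2 \<le> a" "a < q" and sq: "q^2 < pm" and r: "r > 1"
  shows "(1 + real q powr (- r)) * (1 + real pm powr (- r)) \<le> 1 + real a powr (- r)"
proof -
  define Q where "Q = real q"
  define y where "y = Q powr (- r)"
  define P where "P = real pm powr (- r)"
  have Q3: "Q \<ge> 3" using a by (simp add: Q_def)
  have y0: "0 \<le> y" by (simp add: y_def)
  have "Q^2 \<le> real pm" using sq by (simp add: Q_def)
  then have "P \<le> (Q^2) powr (- r)" unfolding P_def using Q3 r by (intro powr_mono2') auto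
  also have "(Q^2) powr (- r) = y^2" using Q3 by (simp add: y_def power2_eq_square powr_mult)
  finally have Py: "P \<le> y^2" .
  have P0: "0 \<le> P" by (simp add: P_def)
  have "y \<le> Q powr (-1)" unfolding y_def using Q3 r by (intro powr_mono) auto
  then have yQ: "y \<le> 1/Q" using Q3 by (simp add: powr_minus_divide)
  have "y + y^2 \<le> 1/Q + (1/Q)^2" using yQ y0 by (intro add_mono power_mono) auto
  also have "\<dots> \<le> 1/(Q-1)" using Q3 by (simp add: field_simps power2_eq_square)
  finally have yy: "y + y^2 \<le> 1/(Q-1)" .
  have "real a \<le> Q - 1" using a by (simp add: Q_def)
  then have "(Q-1) powr (- r) \<le> real a powr (- r)" using a r by (intro powr_mono2') auto
  moreover have "(Q-1) powr (- r) = y * (Q/(Q-1)) powr r"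
    unfolding y_def using Q3 by (intro ratio_powr) auto
  moreover have "Q/(Q-1) \<le> (Q/(Q-1)) powr r"
  proof -
    have "(Q/(Q-1)) powr 1 \<le> (Q/(Q-1)) powr r" using Q3 r by (intro powr_mono) (auto simp: field_simps)
    then show ?thesis using Q3 by simp
  qed
  ultimately have ay: "y * (Q/(Q-1)) \<le> real a powr (- r)"
    using y0 by (metis mult_left_mono order_trans)
  have "(1 + y) * (1 + P) \<le> (1 + y) * (1 + y^2)" using Py y0 by (intro mult_left_mono) auto
  also have "\<dots> = 1 + y * (1 + (y + y^2))" by (simp add: algebra_simps power2_eq_square)
  also have "\<dots> \<le> 1 + y * (1 + 1/(Q-1))" using yy y0 by (intro add_left_mono mult_left_mono) auto
  also have "1 + 1/(Q-1) = Q/(Q-1)" using Q3 by (simp add: field_simps)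
  finally show ?thesis using ay by (simp add: y_def P_def Q_def)
qed

lemma gap_cases:
  assumes r: "r > 1" and JM: "J < M"
    and mq: "u_tail (J+1) r < 1 + real (PR J) powr (- r)"
    and C: "real (PR M) powr (- r) * (1 + real (PR J) powr (- r)) \<le> (real (PR J) powr (- r))^2"
    and sq: "(PR J)^2 < PR M"
  shows "sigma_st r \<alpha> \<le> (1 + real (PR J) powr (- r)) * u_tail (M+1) r
       \<or> (1 + real (PR J) powr (- r)) * (1 + real (PR M) powr (- r)) \<le> sigma_st r \<alpha>"
proof -
  define y where "y = real (PR J) powr (- r)"
  define P where "P = real (PR M) powr (- r)"
  define R where "R = (1 + y) * (1 + P)"
  have r0: "r > 0" using r by simp
  have y0: "0 \<le> y" by (simp add: y_def)
  have P0: "0 \<le> P" by (simp add: P_def)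
  have um1: "1 \<le> u_tail (M+1) r" by (rule u_tail_ge1[OF r])
  have f1: "1 \<le> FF r \<alpha> k" for k using FF_bounds[OF r0] by auto
  consider (A) "\<exists>k<J. \<alpha> (PR k) \<noteq> 0"
    | (D) "\<forall>k\<le>J. \<alpha> (PR k) = 0"
    | (B) "\<forall>k<J. \<alpha> (PR k) = 0" "2 \<le> \<alpha> (PR J)"
    | (C) "\<forall>k<J. \<alpha> (PR k) = 0" "\<alpha> (PR J) = 1" "\<exists>k. J < k \<and> k \<le> M \<and> \<alpha> (PR k) \<noteq> 0"
    | (E) "\<forall>k<J. \<alpha> (PR k) = 0" "\<alpha> (PR J) = 1" "\<forall>k. J < k \<and> k \<le> M \<longrightarrow> \<alpha> (PR k) = 0"
  proof -
    { assume a1: "\<forall>k<J. \<alpha> (PR k) = 0"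
      have ?thesis
      proof (cases "\<alpha> (PR J) = 0")
        case True
        then have "\<forall>k\<le>J. \<alpha> (PR k) = 0" using a1 by (metis le_neq_implies_less)
        then show ?thesis using that by blast
      next
        case False
        show ?thesis
        proof (cases "2 \<le> \<alpha> (PR J)")
          case True then show ?thesis using that a1 by blast
        next
          case F2: False
          then have "\<alpha> (PR J) = 1" using enat_one False by blast
          then show ?thesis using that a1 by blast
        qed
      qed }
    then show ?thesis using that by blast
  qed
  then show ?thesis
  proof cases
    case A
    then obtain k where k: "k < J" "\<alpha> (PR k) \<noteq> 0" by blast
    have "FF r \<alpha> k \<ge> 1 + real (PR k) powr (- r)"
      unfolding FF_def using PR_ge2[of k] r0 enat_ne0[OF k(2)] by (intro pp_ge1) auto
    moreover have "R \<le> 1 + real (PR k) powr (- r)"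
      unfolding R_def y_def P_def using PR_ge2[of k] PR_mono[OF k(1)] sq r
      by (intro small_prime_ineq) auto
    moreover have "(\<Prod>i\<in>{k}. FF r \<alpha> i) \<le> sigma_st r \<alpha>" by (rule sigma_ge_set[OF r]) simp
    ultimately have "R \<le> sigma_st r \<alpha>" by simp
    then show ?thesis unfolding R_def y_def P_def by simp
  next
    case B
    have "FF r \<alpha> J \<ge> 1 + y + y^2"
      unfolding FF_def y_def using PR_ge2[of J] r0 B(2) by (intro pp_ge2) auto
    moreover have "R \<le> 1 + y + y^2" using C unfolding R_def y_def[symmetric] P_def[symmetric]
      by (simp add: algebra_simps)
    moreover have "(\<Prod>i\<in>{J}. FF r \<alpha> i) \<le> sigma_st r \<alpha>" by (rule sigma_ge_set[OF r]) simp
    ultimately have "R \<le> sigma_st r \<alpha>" by simp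
    then show ?thesis unfolding R_def y_def P_def by simp
  next
    case C
    then obtain k where k: "J < k" "k \<le> M" "\<alpha> (PR k) \<noteq> 0" by blast
    have fJ: "FF r \<alpha> J = 1 + y" using FF_one[of \<alpha> J r, OF C(2)] by (simp add: y_def)
    have fk: "FF r \<alpha> k \<ge> 1 + real (PR k) powr (- r)"
      unfolding FF_def using PR_ge2[of k] r0 enat_ne0[OF k(3)] by (intro pp_ge1) auto
    have "P \<le> real (PR k) powr (- r)"
      unfolding P_def using PR_ge2[of k] r0 PR_le_iff[of k M] k(2) by (intro powr_mono2') auto
    then have "R \<le> FF r \<alpha> J * FF r \<alpha> k" unfolding R_def fJ using fk y0
      by (intro mult_left_mono) auto
    moreover have "(\<Prod>i\<in>{J,k}. FF r \<alpha> i) \<le> sigma_st r \<alpha>" by (rule sigma_ge_set[OF r]) simp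
    ultimately have "R \<le> sigma_st r \<alpha>" using k(1) by simp
    then show ?thesis unfolding R_def y_def P_def by simp
  next
    case D
    have prod1: "(\<Prod>k<J+1. FF r \<alpha> k) = 1" using D by (intro prod.neutral) (auto intro: FF_zero)
    have "sigma_st r \<alpha> = (\<Prod>k. FF r \<alpha> (k + (J+1))) * (\<Prod>k<J+1. FF r \<alpha> k)" by (rule sigma_split[OF r])
    also have "\<dots> \<le> u_tail (J+1) r" unfolding prod1 using tail_le[OF r, of \<alpha> "J+1"] by simp
    also have "\<dots> < 1 + y" using mq by (simp add: y_def)
    also have "\<dots> \<le> (1 + y) * u_tail (M+1) r" using um1 y0 by (simp add: mult_left_mono)
    finally show ?thesis by (simp add: y_def)
  next
    case E
    have "(\<Prod>k<M+1. FF r \<alpha> k) = FF r \<alpha> J * (\<Prod>k\<in>{..<M+1} - {J}. FF r \<alpha> k)"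
      using JM by (intro prod.remove) auto
    also have "(\<Prod>k\<in>{..<M+1} - {J}. FF r \<alpha> k) = 1"
    proof (intro prod.neutral ballI)
      fix k assume "k \<in> {..<M+1} - {J}"
      then have "k < J \<or> (J < k \<and> k \<le> M)" by auto
      then have "\<alpha> (PR k) = 0" using E by auto
      then show "FF r \<alpha> k = 1" by (rule FF_zero)
    qed
    also have "FF r \<alpha> J = 1 + y" using FF_one[of \<alpha> J r, OF E(2)] by (simp add: y_def)
    finally have prodE: "(\<Prod>k<M+1. FF r \<alpha> k) = 1 + y" by simp
    have "sigma_st r \<alpha> = (\<Prod>k. FF r \<alpha> (k + (M+1))) * (\<Prod>k<M+1. FF r \<alpha> k)" by (rule sigma_split[OF r])
    also have "\<dots> \<le> u_tail (M+1) r * (1 + y)" unfolding prodE using tail_le[OF r, of \<alpha> "M+1"] y0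
      by (intro mult_right_mono) auto
    finally show ?thesis by (simp add: y_def mult.commute)
  qed
qed

definition alphaL :: "nat \<Rightarrow> nat \<Rightarrow> nat \<Rightarrow> enat" where
  "alphaL J M n = (if n = PR J then 1 else if prime n \<and> PR M < n then \<infinity> else 0)"

definition alphaR :: "nat \<Rightarrow> nat \<Rightarrow> nat \<Rightarrow> enat" where
  "alphaR J M n = (if n = PR J \<or> n = PR M then 1 else 0)"

lemma alphaL_st: "alphaL J M \<in> steinitz"
  unfolding steinitz_def alphaL_def using PR_prime[of J] by auto

lemma alphaR_st: "alphaR J M \<in> steinitz"
  unfolding steinitz_def alphaR_def using PR_prime[of J] PR_prime[of M] by auto

lemma sigma_alphaL:
  assumes r: "r > 1" and JM: "J < M"
  shows "sigma_st r (alphaL J M) = (1 + real (PR J) powr (- r)) * u_tail (M+1) r"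
proof -
  have t: "FF r (alphaL J M) (k + (M+1)) = GG r (k + (M+1))" for k
  proof -
    have "PR (k + (M+1)) \<noteq> PR J" using JM by (simp add: PR_inj)
    moreover have "PR M < PR (k + (M+1))" by (simp add: PR_mono_iff)
    ultimately show ?thesis unfolding FF_def alphaL_def GG_pp using PR_prime by simp
  qed
  have "(\<Prod>k<M+1. FF r (alphaL J M) k) = FF r (alphaL J M) J * (\<Prod>k\<in>{..<M+1} - {J}. FF r (alphaL J M) k)"
    using JM by (intro prod.remove) auto
  also have "(\<Prod>k\<in>{..<M+1} - {J}. FF r (alphaL J M) k) = 1"
  proof (intro prod.neutral ballI FF_zero)
    fix k assume "k \<in> {..<M+1} - {J}"
    then have "k \<noteq> J" "k \<le> M" by auto
    then have "PR k \<noteq> PR J" "\<not> PR M < PR k" by (auto simp: PR_inj PR_mono_iff)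
    then show "alphaL J M (PR k) = 0" by (simp add: alphaL_def)
  qed
  also have "FF r (alphaL J M) J = 1 + real (PR J) powr (- r)" by (rule FF_one) (simp add: alphaL_def)
  finally have p: "(\<Prod>k<M+1. FF r (alphaL J M) k) = 1 + real (PR J) powr (- r)" by simp
  show ?thesis unfolding sigma_split[OF r, of _ "M+1"] p t u_tail_eq by simp
qed

lemma sigma_alphaR:
  assumes r: "r > 1" and JM: "J < M"
  shows "sigma_st r (alphaR J M) = (1 + real (PR J) powr (- r)) * (1 + real (PR M) powr (- r))"
proof -
  have t: "FF r (alphaR J M) (k + (M+1)) = 1" for k
  proof (rule FF_zero)
    have "PR (k + (M+1)) \<noteq> PR J" "PR (k + (M+1)) \<noteq> PR M" using JM by (simp_all add: PR_inj)
    then show "alphaR J M (PR (k + (M+1))) = 0" by (simp add: alphaR_def)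
  qed
  have "(\<Prod>k<M+1. FF r (alphaR J M) k) = FF r (alphaR J M) J * (\<Prod>k\<in>{..<M+1} - {J}. FF r (alphaR J M) k)"
    using JM by (intro prod.remove) auto
  also have "(\<Prod>k\<in>{..<M+1} - {J}. FF r (alphaR J M) k) = FF r (alphaR J M) M * (\<Prod>k\<in>{..<M+1} - {J} - {M}. FF r (alphaR J M) k)"
    using JM by (intro prod.remove) auto
  also have "(\<Prod>k\<in>{..<M+1} - {J} - {M}. FF r (alphaR J M) k) = 1"
  proof (intro prod.neutral ballI FF_zero)
    fix k assume "k \<in> {..<M+1} - {J} - {M}"
    then have "k \<noteq> J" "k \<noteq> M" by auto
    then have "PR k \<noteq> PR J" "PR k \<noteq> PR M" by (auto simp: PR_inj)
    then show "alphaR J M (PR k) = 0" by (simp add: alphaR_def)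
  qed
  also have "FF r (alphaR J M) J = 1 + real (PR J) powr (- r)" by (rule FF_one) (simp add: alphaR_def)
  also have "FF r (alphaR J M) M = 1 + real (PR M) powr (- r)" by (rule FF_one) (simp add: alphaR_def)
  finally have p: "(\<Prod>k<M+1. FF r (alphaR J M) k) = (1 + real (PR J) powr (- r)) * (1 + real (PR M) powr (- r))" by simp
  show ?thesis unfolding sigma_split[OF r, of _ "M+1"] p t by simp
qed

lemma sn_prime:
  assumes q: "prime q"
  shows "sigma_nat r q = 1 + real q powr (- r)"
proof -
  have "{d. d dvd q} = {1, q}" using q by (auto simp: prime_nat_iff)
  moreover have "q \<noteq> 1" using q by auto
  ultimately show ?thesis unfolding sigma_nat_def by simp
qed

lemma sn_two:
  assumes q: "prime q" and p: "prime p" and qp: "q \<noteq> p"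
  shows "sigma_nat r (q * p) = (1 + real q powr (- r)) * (1 + real p powr (- r))"
proof -
  have "{d. d dvd q * p} = {1, q, p, q * p}"
  proof
    show "{d. d dvd q * p} \<subseteq> {1, q, p, q * p}"
    proof
      fix d assume "d \<in> {d. d dvd q * p}"
      then obtain b c where d: "d = b * c" "b dvd q" "c dvd p" using division_decomp by blast
      have "b = 1 \<or> b = q" using d(2) q by (auto simp: prime_nat_iff)
      moreover have "c = 1 \<or> c = p" using d(3) p by (auto simp: prime_nat_iff)
      ultimately show "d \<in> {1, q, p, q * p}" using d(1) by auto
    qed
    show "{1, q, p, q * p} \<subseteq> {d. d dvd q * p}" by auto
  qed
  moreover have q1: "q > 1" "p > 1" using q p prime_gt_1_nat by auto
  moreover have "q * p \<noteq> q" "q * p \<noteq> p" "q * p \<noteq> 1" using q1 by auto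
  ultimately show ?thesis unfolding sigma_nat_def using qp
    by (simp add: powr_mult algebra_simps)
qed

lemma gap_component:
  fixes S :: "real set"
  assumes ab: "a < b" "a \<in> S" "b \<in> S" and dis: "\<And>x. x \<in> S \<Longrightarrow> x \<le> a \<or> b \<le> x"
  shows "{a<..<b} \<in> components (UNIV - S)"
  unfolding in_components_maximal
proof (intro conjI allI impI)
  show "{a<..<b} \<noteq> {}" using ab by simp
  show "{a<..<b} \<subseteq> UNIV - S" using dis by force
  show "connected {a<..<b}" by simp
  fix D assume D: "D \<noteq> {} \<and> {a<..<b} \<subseteq> D \<and> D \<subseteq> UNIV - S \<and> connected D"
  have "(a+b)/2 \<in> {a<..<b}" using ab by simp
  then have mid: "(a+b)/2 \<in> D" using D by blast
  have iv: "\<forall>x\<in>D. \<forall>y\<in>D. \<forall>z. x \<le> z \<longrightarrow> z \<le> y \<longrightarrow> z \<in> D" using D connected_iff_interval by blast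
  show "D = {a<..<b}"
  proof
    show "{a<..<b} \<subseteq> D" using D by simp
    show "D \<subseteq> {a<..<b}"
    proof
      fix x assume x: "x \<in> D"
      have "\<not> x \<le> a"
      proof
        assume "x \<le> a"
        moreover have "a \<le> (a+b)/2" using ab by simp
        ultimately have "a \<in> D" using iv x mid by blast
        then show False using D ab by auto
      qed
      moreover have "\<not> b \<le> x"
      proof
        assume "b \<le> x"
        moreover have "(a+b)/2 \<le> b" using ab by simp
        ultimately have "b \<in> D" using iv x mid by blast
        then show False using D ab by auto
      qed
      ultimately show "x \<in> {a<..<b}" by simp
    qed
  qed
qed

theorem mainTheorem1:
  fixes r :: real and m q :: nat
  assumes "r > 1" and "m \<ge> 1"
    and "mighty r (nth_prime m)" and "mighty r q"
    and "q ^ 2 < nth_prime m"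
  shows "{sigma_nat r q * u_tail m r <..< sigma_nat r (q * nth_prime m)}
           \<in> components (UNIV - sigma_st r ` steinitz)
      \<and> bounded {sigma_nat r q * u_tail m r <..< sigma_nat r (q * nth_prime m)}"
proof -
  have r: "r > 1" using assms(1) .
  define M where "M = m - 1"
  have mM: "m = M + 1" using assms(2) by (simp add: M_def)
  have pm: "nth_prime m = PR M" using mM by simp
  obtain m' where m': "m' \<ge> 1" "nth_prime m = nth_prime m'"
      "1 + real (nth_prime m) powr (- r) > u_tail m' r"
    using assms(3) unfolding mighty_def by blast
  have "PR M = PR (m' - 1)" using m' pm by simp
  then have "M = m' - 1" by (simp add: PR_inj)
  then have "m' = m" using m'(1) mM by simp
  then have mp: "u_tail (M+1) r < 1 + real (PR M) powr (- r)" using m'(3) pm mM by simp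
  obtain j where j: "j \<ge> 1" "q = nth_prime j" "1 + real q powr (- r) > u_tail j r"
    using assms(4) unfolding mighty_def by blast
  define J where "J = j - 1"
  have qJ: "q = PR J" using j by (simp add: J_def)
  have mq: "u_tail (J+1) r < 1 + real (PR J) powr (- r)" using j qJ by (simp add: J_def)
  have sq: "(PR J)^2 < PR M" using assms(5) qJ pm by simp
  have "PR J \<le> (PR J)^2" by (simp add: power2_eq_square)
  then have "PR J < PR M" using sq by linarith
  then have JM: "J < M" by (simp add: PR_mono_iff)
  have C: "real (PR M) powr (- r) * (1 + real (PR J) powr (- r)) \<le> (real (PR J) powr (- r))^2"
    by (rule claimC[OF r mq PR_prime sq])
  define y where "y = real (PR J) powr (- r)"
  define P where "P = real (PR M) powr (- r)"
  have y0: "0 \<le> y" by (simp add: y_def)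
  have Leq: "sigma_nat r q * u_tail m r = (1 + y) * u_tail (M+1) r"
    using sn_prime[OF PR_prime[of J], of r] qJ mM by (simp add: y_def)
  have Req: "sigma_nat r (q * nth_prime m) = (1 + y) * (1 + P)"
    using sn_two[OF PR_prime[of J] PR_prime[of M], of r] qJ pm JM by (simp add: y_def P_def PR_inj)
  define S where "S = sigma_st r ` steinitz"
  have LS: "(1 + y) * u_tail (M+1) r \<in> S"
    unfolding S_def using sigma_alphaL[OF r JM] alphaL_st[of J M] by (auto simp: y_def intro!: image_eqI[where x="alphaL J M"])
  have RS: "(1 + y) * (1 + P) \<in> S"
    unfolding S_def using sigma_alphaR[OF r JM] alphaR_st[of J M] by (auto simp: y_def P_def intro!: image_eqI[where x="alphaR J M"])
  have LR: "(1 + y) * u_tail (M+1) r < (1 + y) * (1 + P)"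
    using mp y0 by (intro mult_strict_left_mono) (auto simp: P_def)
  have dis: "x \<le> (1 + y) * u_tail (M+1) r \<or> (1 + y) * (1 + P) \<le> x" if "x \<in> S" for x
  proof -
    obtain \<alpha> where "x = sigma_st r \<alpha>" using \<open>x \<in> S\<close> unfolding S_def by blast
    then show ?thesis using gap_cases[OF r JM mq C sq, of \<alpha>] by (simp add: y_def P_def)
  qed
  have "{(1 + y) * u_tail (M+1) r <..< (1 + y) * (1 + P)} \<in> components (UNIV - S)"
    by (rule gap_component[OF LR LS RS dis])
  then show ?thesis unfolding Leq Req S_def by simp
qed


end
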